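(* Let $C$ be a set of clients, $F$ a set of facilities, $o_f\ge0$ opening costs, $d(c,f)\ge 0$ connection costs, and $p_c\in[0,1]$ activation probabilities, and let $g_\pi(B)=1-\prod_{c\in B}(1-p_c)$ for $B\subseteq C$. Let $OPT_{\text{CONF-LP-FL}}$ be the optimum of the linear program $$\min \sum_{f\in F}o_f\sum_{B\subseteq C}y_B^f g_\pi(B)+\sum_{c\in C}\sum_{f\in F}p_c\, d(c,f)\sum_{B\subseteq C:\,c\in B}y_B^f$$ subject to $\sum_{f\in F}\sum_{B\subseteq C:\,c\in B}y_B^f\ge 1$ for all $c\in C$ and $y_B^f\ge 0$ for all $f\in F$, $B\subseteq C$; and let $OPT_{\text{LP-FL}}$ be the optimum of $$\min \sum_{f\in F}o_f\max_{c\in C}x_c^f+\sum_{f\in F}o_f\sum_{c\in C}p_c\bar x_c^f+\sum_{c\in C}\sum_{f\in F}p_c\,d(c,f)(x_c^f+\bar x_c^f)$$ subject to $\sum_{f\in F}(x_c^f+\bar x_c^f)\ge 1$ for all $c\in C$ and $x_c^f,\bar x_c^f\ge 0$. Then $OPT_{\text{LP-FL}}\le\frac{e}{e-1}\,OPT_{\text{CONF-LP-FL}}$. *)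

theory Defs
  imports Complex_Main "HOL-Library.Extended_Real"
begin

definition gpi :: "('c \<Rightarrow> real) \<Rightarrow> 'c set \<Rightarrow> real" where
  "gpi p B = 1 - (\<Prod>c\<in>B. 1 - p c)"

definition conf_feasible :: "'c set \<Rightarrow> 'f set \<Rightarrow> ('f \<Rightarrow> 'c set \<Rightarrow> real) \<Rightarrow> bool" where
  "conf_feasible C F y \<longleftrightarrow>
     (\<forall>c\<in>C. (\<Sum>f\<in>F. \<Sum>B\<in>{B. B \<subseteq> C \<and> c \<in> B}. y f B) \<ge> 1) \<and>
     (\<forall>f\<in>F. \<forall>B. B \<subseteq> C \<longrightarrow> y f B \<ge> 0)"

definition conf_obj :: "'c set \<Rightarrow> 'f set \<Rightarrow> ('f \<Rightarrow> real) \<Rightarrow> ('c \<Rightarrow> 'f \<Rightarrow> real) \<Rightarrow> ('c \<Rightarrow> real)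
    \<Rightarrow> ('f \<Rightarrow> 'c set \<Rightarrow> real) \<Rightarrow> real" where
  "conf_obj C F oc d p y =
     (\<Sum>f\<in>F. oc f * (\<Sum>B\<in>{B. B \<subseteq> C}. y f B * gpi p B)) +
     (\<Sum>c\<in>C. \<Sum>f\<in>F. p c * d c f * (\<Sum>B\<in>{B. B \<subseteq> C \<and> c \<in> B}. y f B))"

definition OPT_CONF_LP_FL :: "'c set \<Rightarrow> 'f set \<Rightarrow> ('f \<Rightarrow> real) \<Rightarrow> ('c \<Rightarrow> 'f \<Rightarrow> real) \<Rightarrow> ('c \<Rightarrow> real) \<Rightarrow> ereal" where
  "OPT_CONF_LP_FL C F oc d p = Inf {ereal (conf_obj C F oc d p y) | y. conf_feasible C F y}"

definition lp_feasible :: "'c set \<Rightarrow> 'f set \<Rightarrow> ('c \<Rightarrow> 'f \<Rightarrow> real) \<Rightarrow> ('c \<Rightarrow> 'f \<Rightarrow> real) \<Rightarrow> bool" where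
  "lp_feasible C F x xb \<longleftrightarrow>
     (\<forall>c\<in>C. (\<Sum>f\<in>F. x c f + xb c f) \<ge> 1) \<and>
     (\<forall>c\<in>C. \<forall>f\<in>F. x c f \<ge> 0 \<and> xb c f \<ge> 0)"

definition lp_obj :: "'c set \<Rightarrow> 'f set \<Rightarrow> ('f \<Rightarrow> real) \<Rightarrow> ('c \<Rightarrow> 'f \<Rightarrow> real) \<Rightarrow> ('c \<Rightarrow> real)
    \<Rightarrow> ('c \<Rightarrow> 'f \<Rightarrow> real) \<Rightarrow> ('c \<Rightarrow> 'f \<Rightarrow> real) \<Rightarrow> real" where
  "lp_obj C F oc d p x xb =
     (\<Sum>f\<in>F. oc f * Max ((\<lambda>c. x c f) ` C)) +
     (\<Sum>f\<in>F. oc f * (\<Sum>c\<in>C. p c * xb c f)) +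
     (\<Sum>c\<in>C. \<Sum>f\<in>F. p c * d c f * (x c f + xb c f))"

definition OPT_LP_FL :: "'c set \<Rightarrow> 'f set \<Rightarrow> ('f \<Rightarrow> real) \<Rightarrow> ('c \<Rightarrow> 'f \<Rightarrow> real) \<Rightarrow> ('c \<Rightarrow> real) \<Rightarrow> ereal" where
  "OPT_LP_FL C F oc d p = Inf {ereal (lp_obj C F oc d p x xb) | x xb. lp_feasible C F x xb}"

end

theory Submission
  imports Defs "HOL-Analysis.Convex"
begin

lemma L1:
  fixes p :: "'a \<Rightarrow> real"
  assumes "finite B" "\<forall>c\<in>B. 0 \<le> p c \<and> p c \<le> 1"
  shows "(\<Prod>c\<in>B. 1 - p c) \<le> exp (- (\<Sum>c\<in>B. p c))"
proof -
  have "exp (- (\<Sum>c\<in>B. p c)) = (\<Prod>c\<in>B. exp (- p c))"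
    using assms(1) by (simp add: exp_sum[symmetric] sum_negf)
  moreover have "(\<Prod>c\<in>B. 1 - p c) \<le> (\<Prod>c\<in>B. exp (- p c))"
  proof (rule Groups_Big.prod_mono)
    fix c assume "c \<in> B"
    then show "0 \<le> 1 - p c \<and> 1 - p c \<le> exp (- p c)"
      using assms(2) exp_ge_add_one_self[of "- p c"] by auto
  qed
  ultimately show ?thesis by simp
qed

lemma L2:
  fixes s :: real assumes "s \<ge> 0"
  shows "min 1 s * (1 - exp (-1)) \<le> 1 - exp (-s)"
proof (cases "s \<le> 1")
  case True
  have "exp ((1 - s) *\<^sub>R 0 + s *\<^sub>R (-1)) \<le> (1 - s) * exp 0 + s * exp (-1)"
    by (rule convex_onD[OF exp_convex]) (use assms True in auto)
  then show ?thesis using True by (simp add: algebra_simps)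
next
  case False
  then show ?thesis by simp
qed

lemma L3:
  fixes p :: "'a \<Rightarrow> real"
  assumes "finite B" "\<forall>c\<in>B. 0 \<le> p c \<and> p c \<le> 1"
  shows "min 1 (\<Sum>c\<in>B. p c) \<le> exp 1 / (exp 1 - 1) * gpi p B"
proof -
  have s: "(\<Sum>c\<in>B. p c) \<ge> 0" using assms(2) by (simp add: sum_nonneg)
  have a: "min 1 (\<Sum>c\<in>B. p c) * (1 - exp (-1)) \<le> gpi p B"
    using L2[OF s] L1[OF assms] unfolding gpi_def by linarith
  have e: "exp (1::real) > 1" by simp
  have "exp 1 / (exp 1 - 1) * (1 - exp (-1)) = (1::real)"
    using e by (simp add: exp_minus field_simps)
  then have "min 1 (\<Sum>c\<in>B. p c) = exp 1 / (exp 1 - 1) * (min 1 (\<Sum>c\<in>B. p c) * (1 - exp (-1)))"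
    by (metis mult.assoc mult.commute mult_1)
  also have "\<dots> \<le> exp 1 / (exp 1 - 1) * gpi p B"
    apply (rule mult_left_mono[OF a]) using e by simp
  finally show ?thesis .
qed
lemma swap_lemma:
  fixes p :: "'c \<Rightarrow> real" and g :: "'c set \<Rightarrow> real"
  assumes "finite C"
  shows "(\<Sum>c\<in>C. p c * (\<Sum>B\<in>{B. B \<subseteq> C \<and> c \<in> B}. g B))
       = (\<Sum>B\<in>{B. B \<subseteq> C}. g B * (\<Sum>c\<in>B. p c))"
proof -
  let ?U = "{B. B \<subseteq> C}"
  have fU: "finite ?U" using assms by simp
  have "(\<Sum>c\<in>C. p c * (\<Sum>B\<in>{B. B \<subseteq> C \<and> c \<in> B}. g B))
      = (\<Sum>c\<in>C. \<Sum>B\<in>?U. if c \<in> B then p c * g B else 0)"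
  proof (rule sum.cong[OF refl])
    fix c assume "c \<in> C"
    have "{B. B \<subseteq> C \<and> c \<in> B} = {B \<in> ?U. c \<in> B}" by auto
    then have "(\<Sum>B\<in>{B. B \<subseteq> C \<and> c \<in> B}. g B) = (\<Sum>B\<in>?U. if c \<in> B then g B else 0)"
      using sum.inter_filter[OF fU] by simp
    then show "p c * (\<Sum>B\<in>{B. B \<subseteq> C \<and> c \<in> B}. g B) = (\<Sum>B\<in>?U. if c \<in> B then p c * g B else 0)"
      by (simp add: sum_distrib_left if_distrib cong: if_cong)
  qed
  also have "\<dots> = (\<Sum>B\<in>?U. \<Sum>c\<in>C. if c \<in> B then p c * g B else 0)"
    by (rule sum.swap)
  also have "\<dots> = (\<Sum>B\<in>?U. g B * (\<Sum>c\<in>B. p c))"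
  proof (rule sum.cong[OF refl])
    fix B assume "B \<in> ?U"
    then have "{c \<in> C. c \<in> B} = B" by auto
    then have "(\<Sum>c\<in>C. if c \<in> B then p c * g B else 0) = (\<Sum>c\<in>B. p c * g B)"
      using sum.inter_filter[OF assms, of "\<lambda>c. p c * g B" "\<lambda>c. c \<in> B"] by simp
    then show "(\<Sum>c\<in>C. if c \<in> B then p c * g B else 0) = g B * (\<Sum>c\<in>B. p c)"
      by (simp add: sum_distrib_left mult.commute)
  qed
  finally show ?thesis .
qed

lemma pointwise:
  fixes C :: "'c set" and F :: "'f set"
    and oc :: "'f \<Rightarrow> real" and d :: "'c \<Rightarrow> 'f \<Rightarrow> real" and p :: "'c \<Rightarrow> real"
  assumes fC: "finite C" and ne: "C \<noteq> {}" and fF: "finite F"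
    and oc: "\<forall>f\<in>F. oc f \<ge> 0"
    and dn: "\<forall>c\<in>C. \<forall>f\<in>F. d c f \<ge> 0"
    and pp: "\<forall>c\<in>C. 0 \<le> p c \<and> p c \<le> 1"
    and fe: "conf_feasible C F y"
  shows "\<exists>x xb. lp_feasible C F x xb \<and>
     lp_obj C F oc d p x xb \<le> exp 1 / (exp 1 - 1) * conf_obj C F oc d p y"
proof -
  define k :: real where "k = exp 1 / (exp 1 - 1)"
  have e: "exp (1::real) > 1" by simp
  have k1: "k \<ge> 1" unfolding k_def using e by (simp add: field_simps)
  let ?U = "{B. B \<subseteq> C}"
  let ?Uc = "\<lambda>c. {B. B \<subseteq> C \<and> c \<in> B}"
  have fU: "finite ?U" using fC by simp
  define s where "s B = (\<Sum>c\<in>B. p c)" for B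
  define Pw where "Pw B = (1 \<le> s B)" for B
  define x where "x c f = (\<Sum>B\<in>?Uc c. if Pw B then y f B else 0)" for c f
  define xb where "xb c f = (\<Sum>B\<in>?Uc c. if Pw B then 0 else y f B)" for c f
  have yn: "\<And>f B. f \<in> F \<Longrightarrow> B \<subseteq> C \<Longrightarrow> y f B \<ge> 0"
    using fe unfolding conf_feasible_def by auto
  have split: "x c f + xb c f = (\<Sum>B\<in>?Uc c. y f B)" for c f
    unfolding x_def xb_def sum.distrib[symmetric] by (rule sum.cong) auto
  have feas: "lp_feasible C F x xb"
    unfolding lp_feasible_def
  proof (intro conjI ballI)
    fix c assume "c \<in> C"
    then show "1 \<le> (\<Sum>f\<in>F. x c f + xb c f)"
      using fe unfolding conf_feasible_def split by auto
  next
    fix c f assume "c \<in> C" "f \<in> F"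
    then show "0 \<le> x c f" "0 \<le> xb c f"
      unfolding x_def xb_def using yn by (auto intro!: sum_nonneg)
  qed
  define X where "X f = (\<Sum>B\<in>?U. if Pw B then y f B else 0)" for f
  have maxb: "Max ((\<lambda>c. x c f) ` C) \<le> X f" if "f \<in> F" for f
  proof -
    have "x c f \<le> X f" if "c \<in> C" for c
      unfolding x_def X_def
      by (rule sum_mono2[OF fU]) (use yn \<open>f \<in> F\<close> in auto)
    then show ?thesis using fC ne by simp
  qed
  have xbs: "(\<Sum>c\<in>C. p c * xb c f) = (\<Sum>B\<in>?U. (if Pw B then 0 else y f B) * s B)" for f
    unfolding xb_def s_def by (rule swap_lemma[OF fC])
  have opn: "oc f * Max ((\<lambda>c. x c f) ` C) + oc f * (\<Sum>c\<in>C. p c * xb c f)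
      \<le> k * (oc f * (\<Sum>B\<in>?U. y f B * gpi p B))" if f: "f \<in> F" for f
  proof -
    have "oc f * Max ((\<lambda>c. x c f) ` C) + oc f * (\<Sum>c\<in>C. p c * xb c f)
        \<le> oc f * X f + oc f * (\<Sum>B\<in>?U. (if Pw B then 0 else y f B) * s B)"
      using maxb[OF f] oc f xbs by (simp add: mult_left_mono)
    also have "\<dots> = oc f * (\<Sum>B\<in>?U. y f B * min 1 (s B))"
      unfolding X_def distrib_left[symmetric] sum.distrib[symmetric]
      by (intro arg_cong[where f="\<lambda>t. oc f * t"] sum.cong) (auto simp: Pw_def min_def)
    also have "\<dots> \<le> oc f * (\<Sum>B\<in>?U. y f B * (k * gpi p B))"
    proof (rule mult_left_mono)
      show "0 \<le> oc f" using oc f by auto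
      show "(\<Sum>B\<in>?U. y f B * min 1 (s B)) \<le> (\<Sum>B\<in>?U. y f B * (k * gpi p B))"
      proof (rule sum_mono)
        fix B assume B: "B \<in> ?U"
        have fB: "finite B" using B fC finite_subset by auto
        have "\<forall>c\<in>B. 0 \<le> p c \<and> p c \<le> 1" using B pp by auto
        from L3[OF fB this] have "min 1 (s B) \<le> k * gpi p B" unfolding s_def k_def .
        then show "y f B * min 1 (s B) \<le> y f B * (k * gpi p B)"
          using yn[OF f] B by (simp add: mult_left_mono)
      qed
    qed
    also have "\<dots> = k * (oc f * (\<Sum>B\<in>?U. y f B * gpi p B))"
      by (simp add: sum_distrib_left algebra_simps)
    finally show ?thesis .
  qed
  define D where "D = (\<Sum>c\<in>C. \<Sum>f\<in>F. p c * d c f * (\<Sum>B\<in>?Uc c. y f B))"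
  have Dn: "D \<ge> 0" unfolding D_def using pp dn yn
    by (auto intro!: sum_nonneg mult_nonneg_nonneg)
  have "lp_obj C F oc d p x xb
      = (\<Sum>f\<in>F. oc f * Max ((\<lambda>c. x c f) ` C) + oc f * (\<Sum>c\<in>C. p c * xb c f)) + D"
    unfolding lp_obj_def D_def split by (simp add: sum.distrib)
  also have "\<dots> \<le> (\<Sum>f\<in>F. k * (oc f * (\<Sum>B\<in>?U. y f B * gpi p B))) + k * D"
    using sum_mono[of F _ "\<lambda>f. k * (oc f * (\<Sum>B\<in>?U. y f B * gpi p B))", OF opn] Dn k1
    by (smt (verit) mult_le_cancel_right1)
  also have "\<dots> = k * conf_obj C F oc d p y"
    unfolding conf_obj_def D_def by (simp add: sum_distrib_left distrib_left mult.commute)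
  finally show ?thesis using feas unfolding k_def by blast
qed

theorem lemma5:
  fixes C :: "'c set" and F :: "'f set"
    and oc :: "'f \<Rightarrow> real" and d :: "'c \<Rightarrow> 'f \<Rightarrow> real" and p :: "'c \<Rightarrow> real"
  assumes "finite C" and "C \<noteq> {}" and "finite F"
    and "\<forall>f\<in>F. oc f \<ge> 0"
    and "\<forall>c\<in>C. \<forall>f\<in>F. d c f \<ge> 0"
    and "\<forall>c\<in>C. 0 \<le> p c \<and> p c \<le> 1"
  shows "OPT_LP_FL C F oc d p \<le> ereal (exp 1 / (exp 1 - 1)) * OPT_CONF_LP_FL C F oc d p"
proof -
  define K :: real where "K = exp 1 / (exp 1 - 1)"
  have e: "exp (1::real) > 1" by simp
  have Kp: "K > 0" unfolding K_def using e by simp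
  let ?L = "OPT_LP_FL C F oc d p"
  have inv: "ereal K * ereal (1 / K) = 1" using Kp by simp
  have "?L * ereal (1 / K) \<le> OPT_CONF_LP_FL C F oc d p"
    unfolding OPT_CONF_LP_FL_def
  proof (rule Inf_greatest)
    fix z assume "z \<in> {ereal (conf_obj C F oc d p y) | y. conf_feasible C F y}"
    then obtain y where z: "z = ereal (conf_obj C F oc d p y)" and fe: "conf_feasible C F y" by auto
    obtain x xb where fx: "lp_feasible C F x xb"
      and le: "lp_obj C F oc d p x xb \<le> K * conf_obj C F oc d p y"
      using pointwise[OF assms fe] unfolding K_def by blast
    have "?L \<le> ereal (lp_obj C F oc d p x xb)"
      unfolding OPT_LP_FL_def by (rule Inf_lower) (use fx in blast)
    also have "\<dots> \<le> ereal K * z" using le z by simp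
    finally have "?L * ereal (1 / K) \<le> ereal K * z * ereal (1 / K)"
      by (rule ereal_mult_right_mono) (use Kp in simp)
    also have "\<dots> = z" using inv by (simp add: mult.commute mult.left_commute)
    finally show "?L * ereal (1 / K) \<le> z" .
  qed
  then have "ereal K * (?L * ereal (1 / K)) \<le> ereal K * OPT_CONF_LP_FL C F oc d p"
    by (rule ereal_mult_left_mono) (use Kp in simp)
  moreover have "ereal K * (?L * ereal (1 / K)) = (ereal K * ereal (1 / K)) * ?L"
    by (simp only: ac_simps)
  then have "ereal K * (?L * ereal (1 / K)) = ?L" using inv by simp
  ultimately show ?thesis unfolding K_def by simp
qed

end
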